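(* Consider the multi-scenario problem and the consensus-ADMM iteration described in the context, and let $\dot{z}$ be the optimal value of the original (non-decomposed) problem. For each iteration $\nu\ge 0$ and each scenario pair $(\gamma,k)$ define $$D^{\nu}_{\gamma k}=\max_{x\in\mathcal{Q}_{\gamma k}}\sum_{t\in\mathcal{T}}\Big(c_{t\gamma k}^{\top}x_t-(\mu^{\nu}_{t\gamma k})^{\top}X_t\Big),$$ where $X_t$ is the investment sub-vector of $x_t$. Then at every iteration $\nu$, $$\text{GUB}^{\nu}:=\sum_{\gamma\in\mathcal{G}}\sum_{k\in\mathcal{K}}\pi^{\text{LT}}_\gamma\pi^{\text{MS}}_k\,D^{\nu}_{\gamma k}\;\ge\;\dot{z}.$$
   Context: Setting. $\mathcal{T}$ is a finite set of time stages; $\mathcal{G}$ is a finite set of long-term scenarios with probabilities $\pi^{\text{LT}}_\gamma>0$, $\sum_{\gamma}\pi^{\text{LT}}_\gamma=1$; $\mathcal{K}$ is a finite set of short-term (market) scenarios with probabilities $\pi^{\text{MS}}_k>0$, $\sum_k\pi^{\text{MS}}_k=1$. For each stage $t$, $\mathcal{P}_t$ is a partition of $\mathcal{G}$ into nodes of the long-term scenario tree at stage $t$. For each scenario pair $(\gamma,k)$ there is a decision vector $x_{\gamma k}=(x_{t\gamma k})_{t\in\mathcal{T}}$ constrained to a (possibly non-convex, e.g. mixed-integer) feasible set $\mathcal{Q}_{\gamma k}$, and cost vectors $c_{t\gamma k}$; each $x_{t\gamma k}$ contains a sub-vector of investment decisions $X_{t\gamma k}$. The maxima defining $D^\nu_{\gamma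 k}$ are assumed to be attained. The original problem is: maximize $\sum_{\gamma}\sum_{k}\pi^{\text{LT}}_\gamma\pi^{\text{MS}}_k\sum_{t}c_{t\gamma k}^{\top}x_{t\gamma k}$ subject to $x_{\gamma k}\in\mathcal{Q}_{\gamma k}$ for all $(\gamma,k)$ and the non-anticipativity conditions $X_{t\gamma k}=X_{t\gamma' k'}$ for all $t$, all $k,k'\in\mathcal{K}$ and all $\gamma,\gamma'$ in the same node of $\mathcal{P}_t$; $\dot z$ is its optimal value (attained). (In the paper this is the single-level MILP reformulation of a bilevel multi-stage strategic generation investment problem.) Consensus-ADMM iteration with penalty $\rho>0$, dual variables initialized by $\mu^{-1}_{t\gamma k}=0$ and some initial $X^{-1}_{t\gamma k}$: at iteration $\nu=0,1,2,\dots$: (i) for each $(\gamma,k)$, $X^{\nu}_{\cdot\gamma k}$ is the investment part of a maximizer over $x\in\mathcal{Q}_{\gamma k}$ of $\sum_{t}\big(c_{t\gamma k}^{\top}x_t-(\mu^{\nu-1}_{t\gamma k})^{\top}X_t-\tfrac{\rho}{2}\|X_t-X^{\nu-1}_{t\gamma k}\|_2^2\big)$; (ii) for each $t$ and $(\gamma,k)$ with $\gamma$ in node $N\in\mathcal{P}_t$, $\overline{X}^{\nu}_{t\gamma k}=\dfrac{\sum_{\gamma'\in N,k'\in\mathcal{K}}\pi^{\text{LT}}_{\gamma'}\pi^{\text{MS}}_{k'}X^{\nu}_{t\gamma'k'}}{\sum_{\gamma'\in N,k'\in\mathcal{K}}\pi^{\text{LT}}_{\gamma'}\pi^{\text{MS}}_{k'}}$;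 (iii) $\mu^{\nu}_{t\gamma k}=\mu^{\nu-1}_{t\gamma k}+\rho\,(X^{\nu}_{t\gamma k}-\overline{X}^{\nu}_{t\gamma k})$. *)

theory Defs
  imports "HOL-Analysis.Analysis" "HOL-Library.Disjoint_Sets"
begin

text \<open>The investment sub-vector X_t
  consists of the components in the index set J.\<close>

definition lin_obj :: "'t set \<Rightarrow> ('t \<Rightarrow> 'i::finite \<Rightarrow> real) \<Rightarrow> ('t \<Rightarrow> 'i \<Rightarrow> real) \<Rightarrow> real" where
  "lin_obj T c x = (\<Sum>t\<in>T. \<Sum>i\<in>UNIV. c t i * x t i)"

definition lagr :: "'t set \<Rightarrow> 'i set \<Rightarrow> ('t \<Rightarrow> 'i::finite \<Rightarrow> real) \<Rightarrow> ('t \<Rightarrow> 'i \<Rightarrow> real)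
    \<Rightarrow> ('t \<Rightarrow> 'i \<Rightarrow> real) \<Rightarrow> real" where
  "lagr T J c mu x = (\<Sum>t\<in>T. (\<Sum>i\<in>UNIV. c t i * x t i) - (\<Sum>j\<in>J. mu t j * x t j))"

definition aug_lagr :: "'t set \<Rightarrow> 'i set \<Rightarrow> real \<Rightarrow> ('t \<Rightarrow> 'i::finite \<Rightarrow> real) \<Rightarrow> ('t \<Rightarrow> 'i \<Rightarrow> real)
    \<Rightarrow> ('t \<Rightarrow> 'i \<Rightarrow> real) \<Rightarrow> ('t \<Rightarrow> 'i \<Rightarrow> real) \<Rightarrow> real" where
  "aug_lagr T J \<rho> c mu Xprev x =
     (\<Sum>t\<in>T. (\<Sum>i\<in>UNIV. c t i * x t i) - (\<Sum>j\<in>J. mu t j * x t j)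
             - \<rho> / 2 * (\<Sum>j\<in>J. (x t j - Xprev t j)\<^sup>2))"

definition nonanticipative :: "'t set \<Rightarrow> ('t \<Rightarrow> 'g set set) \<Rightarrow> 'k set \<Rightarrow> 'i set
    \<Rightarrow> ('g \<Rightarrow> 'k \<Rightarrow> 't \<Rightarrow> 'i \<Rightarrow> real) \<Rightarrow> bool" where
  "nonanticipative T P K J x \<longleftrightarrow>
     (\<forall>t\<in>T. \<forall>N\<in>P t. \<forall>\<gamma>\<in>N. \<forall>\<gamma>'\<in>N. \<forall>k\<in>K. \<forall>k'\<in>K. \<forall>j\<in>J. x \<gamma> k t j = x \<gamma>' k' t j)"

definition total_obj :: "'g set \<Rightarrow> 'k set \<Rightarrow> 't set \<Rightarrow> ('g \<Rightarrow> real) \<Rightarrow> ('k \<Rightarrow> real)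
    \<Rightarrow> ('g \<Rightarrow> 'k \<Rightarrow> 't \<Rightarrow> 'i::finite \<Rightarrow> real) \<Rightarrow> ('g \<Rightarrow> 'k \<Rightarrow> 't \<Rightarrow> 'i \<Rightarrow> real) \<Rightarrow> real" where
  "total_obj G K T \<pi>LT \<pi>MS c x = (\<Sum>\<gamma>\<in>G. \<Sum>k\<in>K. \<pi>LT \<gamma> * \<pi>MS k * lin_obj T (c \<gamma> k) (x \<gamma> k))"

end

theory Submission
  imports Defs
begin

theorem theorem1:
  fixes G :: "'g set" and K :: "'k set" and T :: "'t set" and J :: "'i::finite set"
    and \<pi>LT :: "'g \<Rightarrow> real" and \<pi>MS :: "'k \<Rightarrow> real"
    and P :: "'t \<Rightarrow> 'g set set"
    and Q :: "'g \<Rightarrow> 'k \<Rightarrow> ('t \<Rightarrow> 'i \<Rightarrow> real) set"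
    and c :: "'g \<Rightarrow> 'k \<Rightarrow> 't \<Rightarrow> 'i \<Rightarrow> real"
    and zdot :: real and \<rho> :: real
    and Xinit :: "'g \<Rightarrow> 'k \<Rightarrow> 't \<Rightarrow> 'i \<Rightarrow> real"
    and X Xbar \<mu> :: "nat \<Rightarrow> 'g \<Rightarrow> 'k \<Rightarrow> 't \<Rightarrow> 'i \<Rightarrow> real"
    and \<nu> :: nat
  assumes finG: "finite G" and finK: "finite K" and finT: "finite T"
    and piLT_pos: "\<forall>\<gamma>\<in>G. \<pi>LT \<gamma> > 0" and piLT_sum: "(\<Sum>\<gamma>\<in>G. \<pi>LT \<gamma>) = 1"
    and piMS_pos: "\<forall>k\<in>K. \<pi>MS k > 0" and piMS_sum: "(\<Sum>k\<in>K. \<pi>MS k) = 1"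
    and partition: "\<forall>t\<in>T. partition_on G (P t)"
    \<comment> \<open>zdot is the optimal value of the original problem, attained\<close>
    and zdot_attained: "\<exists>x. (\<forall>\<gamma>\<in>G. \<forall>k\<in>K. x \<gamma> k \<in> Q \<gamma> k) \<and> nonanticipative T P K J x
                           \<and> total_obj G K T \<pi>LT \<pi>MS c x = zdot"
    and zdot_opt: "\<forall>x. (\<forall>\<gamma>\<in>G. \<forall>k\<in>K. x \<gamma> k \<in> Q \<gamma> k) \<and> nonanticipative T P K J x
                           \<longrightarrow> total_obj G K T \<pi>LT \<pi>MS c x \<le> zdot"
    and rho_pos: "\<rho> > 0"
    \<comment> \<open>ADMM step (i); \<mu>^{-1} = 0 and X^{-1} = Xinit\<close>
    and step_i: "\<forall>n. \<forall>\<gamma>\<in>G. \<forall>k\<in>K. \<exists>x\<in>Q \<gamma> k.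
        (\<forall>y\<in>Q \<gamma> k.
           aug_lagr T J \<rho> (c \<gamma> k) (if n = 0 then (\<lambda>_ _. 0) else \<mu> (n - 1) \<gamma> k)
                    (if n = 0 then Xinit \<gamma> k else X (n - 1) \<gamma> k) y
         \<le> aug_lagr T J \<rho> (c \<gamma> k) (if n = 0 then (\<lambda>_ _. 0) else \<mu> (n - 1) \<gamma> k)
                    (if n = 0 then Xinit \<gamma> k else X (n - 1) \<gamma> k) x)
        \<and> (\<forall>t\<in>T. \<forall>j\<in>J. X n \<gamma> k t j = x t j)"
    \<comment> \<open>ADMM step (ii)\<close>
    and step_ii: "\<forall>n. \<forall>t\<in>T. \<forall>N\<in>P t. \<forall>\<gamma>\<in>N. \<forall>k\<in>K. \<forall>j\<in>J.
        Xbar n \<gamma> k t j =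
          (\<Sum>\<gamma>'\<in>N. \<Sum>k'\<in>K. \<pi>LT \<gamma>' * \<pi>MS k' * X n \<gamma>' k' t j)
          / (\<Sum>\<gamma>'\<in>N. \<Sum>k'\<in>K. \<pi>LT \<gamma>' * \<pi>MS k')"
    \<comment> \<open>ADMM step (iii)\<close>
    and step_iii: "\<forall>n. \<forall>\<gamma>\<in>G. \<forall>k\<in>K. \<forall>t\<in>T. \<forall>j\<in>J.
        \<mu> n \<gamma> k t j = (if n = 0 then 0 else \<mu> (n - 1) \<gamma> k t j) + \<rho> * (X n \<gamma> k t j - Xbar n \<gamma> k t j)"
    \<comment> \<open>the maxima defining D^\<nu> are attained\<close>
    and D_attained: "\<forall>n. \<forall>\<gamma>\<in>G. \<forall>k\<in>K. \<exists>x\<in>Q \<gamma> k. \<forall>y\<in>Q \<gamma> k.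
        lagr T J (c \<gamma> k) (\<mu> n \<gamma> k) y \<le> lagr T J (c \<gamma> k) (\<mu> n \<gamma> k) x"
  shows "(\<Sum>\<gamma>\<in>G. \<Sum>k\<in>K. \<pi>LT \<gamma> * \<pi>MS k *
            (SUP x\<in>Q \<gamma> k. lagr T J (c \<gamma> k) (\<mu> \<nu> \<gamma> k) x)) \<ge> zdot"
proof -
  define w where "w = (\<lambda>\<gamma> k. \<pi>LT \<gamma> * \<pi>MS k)"
  have finP: "\<And>t N. t \<in> T \<Longrightarrow> N \<in> P t \<Longrightarrow> N \<subseteq> G \<and> N \<noteq> {}"
    using partition unfolding partition_on_def by blast
  have Wpos: "(\<Sum>\<gamma>'\<in>N. \<Sum>k'\<in>K. \<pi>LT \<gamma>' * \<pi>MS k') > 0" if "t \<in> T" "N \<in> P t" "K \<noteq> {}" for t N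
  proof -
    have NG: "N \<subseteq> G" "N \<noteq> {}" using finP that by auto
    have fN: "finite N" using NG finG finite_subset by blast
    show ?thesis
    proof (rule sum_pos[OF fN NG(2)])
      fix g assume "g \<in> N"
      show "0 < (\<Sum>k'\<in>K. \<pi>LT g * \<pi>MS k')"
      proof (rule sum_pos[OF finK that(3)])
        fix k assume "k \<in> K"
        then show "0 < \<pi>LT g * \<pi>MS k" using \<open>g \<in> N\<close> NG piLT_pos piMS_pos by auto
      qed
    qed
  qed
  have muz: "\<forall>t\<in>T. \<forall>N\<in>P t. \<forall>j\<in>J. (\<Sum>\<gamma>\<in>N. \<Sum>k\<in>K. w \<gamma> k * \<mu> n \<gamma> k t j) = 0" for n
  proof (induction n)
    case 0
    show ?case
    proof (intro ballI)
      fix t N j assume tN: "t \<in> T" "N \<in> P t" "j \<in> J"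
      have NG: "N \<subseteq> G" using finP tN by auto
      define S where "S = (\<Sum>\<gamma>'\<in>N. \<Sum>k'\<in>K. \<pi>LT \<gamma>' * \<pi>MS k' * X 0 \<gamma>' k' t j)"
      define W where "W = (\<Sum>\<gamma>'\<in>N. \<Sum>k'\<in>K. \<pi>LT \<gamma>' * \<pi>MS k')"
      have "(\<Sum>\<gamma>\<in>N. \<Sum>k\<in>K. w \<gamma> k * \<mu> 0 \<gamma> k t j)
          = (\<Sum>\<gamma>\<in>N. \<Sum>k\<in>K. \<rho> * (w \<gamma> k * X 0 \<gamma> k t j) - \<rho> * (S / W) * w \<gamma> k)"
      proof (rule sum.cong[OF refl], rule sum.cong[OF refl])
        fix \<gamma> k assume gk: "\<gamma> \<in> N" "k \<in> K"
        have g: "\<gamma> \<in> G" using gk NG by auto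
        have xb: "Xbar 0 \<gamma> k t j = S / W" unfolding S_def W_def by (rule step_ii[rule_format, OF tN(1,2) gk tN(3)])
        have mueq: "\<mu> 0 \<gamma> k t j = 0 + \<rho> * (X 0 \<gamma> k t j - S / W)"
          using step_iii[rule_format, OF g gk(2) tN(1,3)] xb by simp
        then show "w \<gamma> k * \<mu> 0 \<gamma> k t j = \<rho> * (w \<gamma> k * X 0 \<gamma> k t j) - \<rho> * (S / W) * w \<gamma> k"
          by (subst mueq) (simp add: algebra_simps)
      qed
      also have "\<dots> = \<rho> * S - \<rho> * (S / W) * W"
        unfolding S_def W_def w_def
        by (simp add: sum_subtractf sum_distrib_left mult.assoc)
      also have "\<dots> = 0"
      proof (cases "K = {}")
        case True then show ?thesis unfolding S_def W_def by simp
      next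
        case False then have "W > 0" using Wpos tN unfolding W_def by blast
        then show ?thesis by simp
      qed
      finally show "(\<Sum>\<gamma>\<in>N. \<Sum>k\<in>K. w \<gamma> k * \<mu> 0 \<gamma> k t j) = 0" .
    qed
  next
    case (Suc n)
    show ?case
    proof (intro ballI)
      fix t N j assume tN: "t \<in> T" "N \<in> P t" "j \<in> J"
      have NG: "N \<subseteq> G" using finP tN by auto
      define S where "S = (\<Sum>\<gamma>'\<in>N. \<Sum>k'\<in>K. \<pi>LT \<gamma>' * \<pi>MS k' * X (Suc n) \<gamma>' k' t j)"
      define W where "W = (\<Sum>\<gamma>'\<in>N. \<Sum>k'\<in>K. \<pi>LT \<gamma>' * \<pi>MS k')"
      have "(\<Sum>\<gamma>\<in>N. \<Sum>k\<in>K. w \<gamma> k * \<mu> (Suc n) \<gamma> k t j)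
          = (\<Sum>\<gamma>\<in>N. \<Sum>k\<in>K. w \<gamma> k * \<mu> n \<gamma> k t j + (\<rho> * (w \<gamma> k * X (Suc n) \<gamma> k t j) - \<rho> * (S / W) * w \<gamma> k))"
      proof (rule sum.cong[OF refl], rule sum.cong[OF refl])
        fix \<gamma> k assume gk: "\<gamma> \<in> N" "k \<in> K"
        have g: "\<gamma> \<in> G" using gk NG by auto
        have xb: "Xbar (Suc n) \<gamma> k t j = S / W" unfolding S_def W_def by (rule step_ii[rule_format, OF tN(1,2) gk tN(3)])
        have mueq: "\<mu> (Suc n) \<gamma> k t j = \<mu> n \<gamma> k t j + \<rho> * (X (Suc n) \<gamma> k t j - S / W)"
          using step_iii[rule_format, OF g gk(2) tN(1,3)] xb by simp
        then show "w \<gamma> k * \<mu> (Suc n) \<gamma> k t j = w \<gamma> k * \<mu> n \<gamma> k t j + (\<rho> * (w \<gamma> k * X (Suc n) \<gamma> k t j) - \<rho> * (S / W) * w \<gamma> k)"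
          by (subst mueq) (simp add: algebra_simps)
      qed
      also have "\<dots> = (\<Sum>\<gamma>\<in>N. \<Sum>k\<in>K. w \<gamma> k * \<mu> n \<gamma> k t j) + (\<rho> * S - \<rho> * (S / W) * W)"
        unfolding S_def W_def w_def
        by (simp add: sum.distrib sum_subtractf sum_distrib_left mult.assoc)
      also have "\<dots> = 0"
      proof (cases "K = {}")
        case True then show ?thesis unfolding S_def W_def by simp
      next
        case False then have "W > 0" using Wpos tN unfolding W_def by blast
        then show ?thesis using Suc tN by simp
      qed
      finally show "(\<Sum>\<gamma>\<in>N. \<Sum>k\<in>K. w \<gamma> k * \<mu> (Suc n) \<gamma> k t j) = 0" .
    qed
  qed
  obtain x where xQ: "\<forall>\<gamma>\<in>G. \<forall>k\<in>K. x \<gamma> k \<in> Q \<gamma> k" and xna: "nonanticipative T P K J x"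
    and xz: "total_obj G K T \<pi>LT \<pi>MS c x = zdot" using zdot_attained by blast
  have inner0: "(\<Sum>\<gamma>\<in>G. \<Sum>k\<in>K. w \<gamma> k * (\<mu> \<nu> \<gamma> k t j * x \<gamma> k t j)) = 0"
    if tj: "t \<in> T" "j \<in> J" for t j
  proof -
    have pt: "partition_on G (P t)" using partition tj by auto
    have fP: "finite (P t)" using pt finG
        by (metis finite_elements)
    have "(\<Sum>\<gamma>\<in>G. \<Sum>k\<in>K. w \<gamma> k * (\<mu> \<nu> \<gamma> k t j * x \<gamma> k t j))
        = (\<Sum>N\<in>P t. \<Sum>\<gamma>\<in>N. \<Sum>k\<in>K. w \<gamma> k * (\<mu> \<nu> \<gamma> k t j * x \<gamma> k t j))"
    proof -
      have "G = \<Union>(P t)" using pt unfolding partition_on_def by auto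
      moreover have "sum (\<lambda>\<gamma>. \<Sum>k\<in>K. w \<gamma> k * (\<mu> \<nu> \<gamma> k t j * x \<gamma> k t j)) (\<Union>(P t))
        = (sum \<circ> sum) (\<lambda>\<gamma>. \<Sum>k\<in>K. w \<gamma> k * (\<mu> \<nu> \<gamma> k t j * x \<gamma> k t j)) (P t)"
      proof (rule sum.Union_disjoint)
        show "\<forall>A\<in>P t. finite A" using finP tj finG finite_subset by blast
        show "\<forall>A\<in>P t. \<forall>B\<in>P t. A \<noteq> B \<longrightarrow> A \<inter> B = {}"
          using partition_onD2[OF pt] by (auto dest: disjointD)
      qed
      ultimately show ?thesis by (simp only: o_def)
    qed
    also have "\<dots> = 0"
    proof (rule sum.neutral, intro ballI)
      fix N assume NP: "N \<in> P t"
      show "(\<Sum>\<gamma>\<in>N. \<Sum>k\<in>K. w \<gamma> k * (\<mu> \<nu> \<gamma> k t j * x \<gamma> k t j)) = 0"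
      proof (cases "K = {}")
        case True then show ?thesis by simp
      next
        case False
        then obtain k0 where k0: "k0 \<in> K" by blast
        obtain g0 where g0: "g0 \<in> N" using finP tj NP by blast
        have "(\<Sum>\<gamma>\<in>N. \<Sum>k\<in>K. w \<gamma> k * (\<mu> \<nu> \<gamma> k t j * x \<gamma> k t j))
            = (\<Sum>\<gamma>\<in>N. \<Sum>k\<in>K. (w \<gamma> k * \<mu> \<nu> \<gamma> k t j) * x g0 k0 t j)"
        proof (rule sum.cong[OF refl], rule sum.cong[OF refl])
          fix \<gamma> k assume gk: "\<gamma> \<in> N" "k \<in> K"
          have "x \<gamma> k t j = x g0 k0 t j"
            by (rule xna[unfolded nonanticipative_def, rule_format, OF tj(1) NP gk(1) g0 gk(2) k0 tj(2)])
          then show "w \<gamma> k * (\<mu> \<nu> \<gamma> k t j * x \<gamma> k t j) = w \<gamma> k * \<mu> \<nu> \<gamma> k t j * x g0 k0 t j"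
            by simp
        qed
        also have "\<dots> = (\<Sum>\<gamma>\<in>N. \<Sum>k\<in>K. w \<gamma> k * \<mu> \<nu> \<gamma> k t j) * x g0 k0 t j"
          by (simp add: sum_distrib_right)
        also have "\<dots> = 0" using muz tj NP by simp
        finally show ?thesis .
      qed
    qed
    finally show ?thesis .
  qed
  have "(\<Sum>\<gamma>\<in>G. \<Sum>k\<in>K. w \<gamma> k * lagr T J (c \<gamma> k) (\<mu> \<nu> \<gamma> k) (x \<gamma> k))
      = total_obj G K T \<pi>LT \<pi>MS c x
        - (\<Sum>t\<in>T. \<Sum>j\<in>J. \<Sum>\<gamma>\<in>G. \<Sum>k\<in>K. w \<gamma> k * (\<mu> \<nu> \<gamma> k t j * x \<gamma> k t j))"
  proof -
    define f where "f = (\<lambda>\<gamma> k t j. w \<gamma> k * (\<mu> \<nu> \<gamma> k t j * x \<gamma> k t j))"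
    have "(\<Sum>\<gamma>\<in>G. \<Sum>k\<in>K. w \<gamma> k * lagr T J (c \<gamma> k) (\<mu> \<nu> \<gamma> k) (x \<gamma> k))
       = (\<Sum>\<gamma>\<in>G. \<Sum>k\<in>K. w \<gamma> k * lin_obj T (c \<gamma> k) (x \<gamma> k) - (\<Sum>t\<in>T. \<Sum>j\<in>J. f \<gamma> k t j))"
      unfolding lagr_def lin_obj_def f_def
      by (simp add: sum_subtractf right_diff_distrib sum_distrib_left mult.assoc)
    also have "\<dots> = total_obj G K T \<pi>LT \<pi>MS c x - (\<Sum>\<gamma>\<in>G. \<Sum>k\<in>K. \<Sum>t\<in>T. \<Sum>j\<in>J. f \<gamma> k t j)"
      unfolding total_obj_def w_def by (simp add: sum_subtractf)
    also have "(\<Sum>\<gamma>\<in>G. \<Sum>k\<in>K. \<Sum>t\<in>T. \<Sum>j\<in>J. f \<gamma> k t j) = (\<Sum>\<gamma>\<in>G. \<Sum>t\<in>T. \<Sum>j\<in>J. \<Sum>k\<in>K. f \<gamma> k t j)"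
    proof (rule sum.cong[OF refl])
      fix \<gamma>
      have "(\<Sum>k\<in>K. \<Sum>t\<in>T. \<Sum>j\<in>J. f \<gamma> k t j) = (\<Sum>t\<in>T. \<Sum>k\<in>K. \<Sum>j\<in>J. f \<gamma> k t j)"
        by (rule sum.swap)
      also have "\<dots> = (\<Sum>t\<in>T. \<Sum>j\<in>J. \<Sum>k\<in>K. f \<gamma> k t j)"
        by (rule sum.cong[OF refl], rule sum.swap)
      finally show "(\<Sum>k\<in>K. \<Sum>t\<in>T. \<Sum>j\<in>J. f \<gamma> k t j) = (\<Sum>t\<in>T. \<Sum>j\<in>J. \<Sum>k\<in>K. f \<gamma> k t j)" .
    qed
    also have "\<dots> = (\<Sum>t\<in>T. \<Sum>\<gamma>\<in>G. \<Sum>j\<in>J. \<Sum>k\<in>K. f \<gamma> k t j)"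
      by (rule sum.swap)
    also have "\<dots> = (\<Sum>t\<in>T. \<Sum>j\<in>J. \<Sum>\<gamma>\<in>G. \<Sum>k\<in>K. f \<gamma> k t j)"
      by (rule sum.cong[OF refl], rule sum.swap)
    finally show ?thesis unfolding f_def .
  qed
  also have "\<dots> = zdot" using inner0 xz by simp
  finally have eq: "(\<Sum>\<gamma>\<in>G. \<Sum>k\<in>K. w \<gamma> k * lagr T J (c \<gamma> k) (\<mu> \<nu> \<gamma> k) (x \<gamma> k)) = zdot" .
  have "(\<Sum>\<gamma>\<in>G. \<Sum>k\<in>K. w \<gamma> k * lagr T J (c \<gamma> k) (\<mu> \<nu> \<gamma> k) (x \<gamma> k))
     \<le> (\<Sum>\<gamma>\<in>G. \<Sum>k\<in>K. w \<gamma> k * (SUP y\<in>Q \<gamma> k. lagr T J (c \<gamma> k) (\<mu> \<nu> \<gamma> k) y))"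
  proof (rule sum_mono, rule sum_mono)
    fix g k assume g: "g \<in> G" and k: "k \<in> K"
    have bdd: "bdd_above ((\<lambda>y. lagr T J (c g k) (\<mu> \<nu> g k) y) ` Q g k)"
    proof -
      obtain z where "z \<in> Q g k" "\<forall>y\<in>Q g k. lagr T J (c g k) (\<mu> \<nu> g k) y \<le> lagr T J (c g k) (\<mu> \<nu> g k) z"
        using D_attained g k by blast
      then show ?thesis by (auto simp: bdd_above_def)
    qed
    have "lagr T J (c g k) (\<mu> \<nu> g k) (x g k) \<le> (SUP y\<in>Q g k. lagr T J (c g k) (\<mu> \<nu> g k) y)"
      by (rule cSUP_upper[OF _ bdd]) (use xQ g k in auto)
    moreover have "w g k \<ge> 0" using piLT_pos piMS_pos g k unfolding w_def by (simp add: less_imp_le)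
    ultimately show "w g k * lagr T J (c g k) (\<mu> \<nu> g k) (x g k)
        \<le> w g k * (SUP y\<in>Q g k. lagr T J (c g k) (\<mu> \<nu> g k) y)"
      by (rule mult_left_mono)
  qed
  then show ?thesis using eq unfolding w_def by simp
qed

end
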